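(* Let $L$ be a positive integer and let $(\mathbf{F},\mathbf{G})$ be an eigencomplementary pair of matrices $\mathbf{F},\mathbf{G}\in\mathbb{R}^{L\times L}$ which are both singular. If $\mathbf{u},\mathbf{w}\in\mathbb{R}^L$ satisfy $\mathbf{G}\mathbf{u}=\mathbf{F}\mathbf{w}$, then $\mathbf{u}^\top\mathbf{w}=0$.
   Context: A pair $(\mathbf{F},\mathbf{G})$ of real symmetric $L\times L$ matrices is called eigencomplementary if $\mathbf{F}$ is negative semi-definite, $\mathbf{G}$ is positive semi-definite, $\mathbf{F}$ and $\mathbf{G}$ have a common basis of eigenvectors of $\mathbb{R}^L$, and, in the case that $\mathbf{F}$ and $\mathbf{G}$ are both singular, additionally $\bigoplus_{\xi\in\sigma(\mathbf{F}),\,\xi<0}\operatorname{Eig}_{\mathbf{F}}(\xi)=\operatorname{Eig}_{\mathbf{G}}(0)$, where $\sigma(\cdot)$ denotes the spectrum and $\operatorname{Eig}_{\mathbf{M}}(\xi)$ the eigenspace of $\mathbf{M}$ for the eigenvalue $\xi$. *)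

theory Defs
  imports "HOL-Analysis.Analysis"
begin

text \<open>Real L x L matrices are rendered as real^'n^'n with L = CARD('n).\<close>

definition symmetric_matrix :: "real^'n^'n \<Rightarrow> bool" where
  "symmetric_matrix M \<longleftrightarrow> transpose M = M"

definition pos_semidef :: "real^'n^'n \<Rightarrow> bool" where
  "pos_semidef M \<longleftrightarrow> symmetric_matrix M \<and> (\<forall>x. 0 \<le> x \<bullet> (M *v x))"

definition neg_semidef :: "real^'n^'n \<Rightarrow> bool" where
  "neg_semidef M \<longleftrightarrow> symmetric_matrix M \<and> (\<forall>x. x \<bullet> (M *v x) \<le> 0)"

definition eigenspace :: "real^'n^'n \<Rightarrow> real \<Rightarrow> (real^'n) set" where
  "eigenspace M \<xi> = {v. M *v v = \<xi> *\<^sub>R v}"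

definition matrix_spectrum :: "real^'n^'n \<Rightarrow> real set" where
  "matrix_spectrum M = {\<xi>. \<exists>v. v \<noteq> 0 \<and> M *v v = \<xi> *\<^sub>R v}"

definition is_eigenvector :: "real^'n^'n \<Rightarrow> real^'n \<Rightarrow> bool" where
  "is_eigenvector M v \<longleftrightarrow> v \<noteq> 0 \<and> (\<exists>\<xi>. M *v v = \<xi> *\<^sub>R v)"

definition common_eigenbasis :: "real^'n^'n \<Rightarrow> real^'n^'n \<Rightarrow> bool" where
  "common_eigenbasis F G \<longleftrightarrow>
     (\<exists>B. independent B \<and> span B = UNIV \<and>
          (\<forall>v\<in>B. is_eigenvector F v \<and> is_eigenvector G v))"

definition singular_matrix :: "real^'n^'n \<Rightarrow> bool" where
  "singular_matrix M \<longleftrightarrow> \<not> invertible M"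

text \<open>The (internal) direct sum of the eigenspaces of F for negative eigenvalues is
  the span of their union (these eigenspaces are independent for symmetric F).\<close>
definition eigencomplementary :: "real^'n^'n \<Rightarrow> real^'n^'n \<Rightarrow> bool" where
  "eigencomplementary F G \<longleftrightarrow>
     symmetric_matrix F \<and> symmetric_matrix G \<and>
     neg_semidef F \<and> pos_semidef G \<and> common_eigenbasis F G \<and>
     ((singular_matrix F \<and> singular_matrix G) \<longrightarrow>
        span (\<Union>\<xi>\<in>{\<xi>\<in>matrix_spectrum F. \<xi> < 0}. eigenspace F \<xi>) = eigenspace G 0)"

end

theory Submission
  imports Defs
begin

lemma sym_inner:
  fixes M :: "real^'n^'n"
  assumes "symmetric_matrix M"
  shows "(M *v x) \<bullet> y = x \<bullet> (M *v y)"
proof -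
  have "M *v x = x v* M"
    using assms unfolding symmetric_matrix_def
    by (metis transpose_matrix_vector)
  then show ?thesis by (simp add: dot_lmul_matrix)
qed

theorem lemma2p6:
  fixes F G :: "real^'n^'n" and u w :: "real^'n"
  assumes "eigencomplementary F G"
    and "singular_matrix F" and "singular_matrix G"
    and "G *v u = F *v w"
  shows "u \<bullet> w = 0"
proof -
  have sF: "symmetric_matrix F" and sG: "symmetric_matrix G" and nF: "neg_semidef F"
    and cb: "common_eigenbasis F G"
    and eq: "span (\<Union>\<xi>\<in>{\<xi>\<in>matrix_spectrum F. \<xi> < 0}. eigenspace F \<xi>) = eigenspace G 0"
    using assms unfolding eigencomplementary_def by auto
  obtain B where B: "span B = UNIV" "\<And>v. v \<in> B \<Longrightarrow> is_eigenvector F v"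
    using cb unfolding common_eigenbasis_def by blast
  have basis: "F *v v = 0 \<or> G *v v = 0" if vB: "v \<in> B" for v
  proof -
    obtain \<xi> where v0: "v \<noteq> 0" and Fv: "F *v v = \<xi> *\<^sub>R v"
      using B(2)[OF vB] unfolding is_eigenvector_def by blast
    have "v \<bullet> (F *v v) \<le> 0" using nF unfolding neg_semidef_def by blast
    hence "\<xi> * (v \<bullet> v) \<le> 0" using Fv by simp
    moreover have "v \<bullet> v > 0" using v0 by simp
    ultimately have "\<xi> \<le> 0" by (simp add: mult_le_0_iff)
    show ?thesis
    proof (cases "\<xi> = 0")
      case True then show ?thesis using Fv by simp
    next
      case False
      hence "\<xi> < 0" using \<open>\<xi> \<le> 0\<close> by simp
      hence "\<xi> \<in> {\<xi>\<in>matrix_spectrum F. \<xi> < 0}"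
        using v0 Fv unfolding matrix_spectrum_def by blast
      moreover have "v \<in> eigenspace F \<xi>" using Fv unfolding eigenspace_def by simp
      ultimately have "v \<in> span (\<Union>\<xi>\<in>{\<xi>\<in>matrix_spectrum F. \<xi> < 0}. eigenspace F \<xi>)"
        by (meson UN_I span_base)
      then show ?thesis using eq unfolding eigenspace_def by simp
    qed
  qed
  define z where "z = G *v u"
  have zorth: "orthogonal z v" if "v \<in> B" for v
  proof (cases "F *v v = 0")
    case True
    have "z \<bullet> v = w \<bullet> (F *v v)" unfolding z_def assms(4) using sym_inner[OF sF] by simp
    then show ?thesis using True unfolding orthogonal_def by simp
  next
    case False
    hence "G *v v = 0" using basis[OF that] by simp
    have "z \<bullet> v = u \<bullet> (G *v v)" unfolding z_def using sym_inner[OF sG] by simp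
    then show ?thesis using \<open>G *v v = 0\<close> unfolding orthogonal_def by simp
  qed
  have "orthogonal z z" by (rule orthogonal_to_span[where S=B]) (use B(1) zorth in auto)
  hence z0: "z = 0" unfolding orthogonal_def by simp
  hence Gu: "u \<in> eigenspace G 0" unfolding z_def eigenspace_def by simp
  have Fw: "F *v w = 0" using z0 assms(4) unfolding z_def by simp
  have "orthogonal w x" if xU: "x \<in> (\<Union>\<xi>\<in>{\<xi>\<in>matrix_spectrum F. \<xi> < 0}. eigenspace F \<xi>)" for x
  proof -
    obtain \<xi> where \<xi>: "\<xi> < 0" "F *v x = \<xi> *\<^sub>R x"
      using xU unfolding eigenspace_def by auto
    have "\<xi> * (x \<bullet> w) = (F *v x) \<bullet> w" using \<xi> by simp
    also have "\<dots> = x \<bullet> (F *v w)" using sym_inner[OF sF] by simp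
    finally have "\<xi> * (x \<bullet> w) = 0" using Fw by simp
    then show ?thesis using \<xi>(1) unfolding orthogonal_def by (simp add: inner_commute)
  qed
  hence "orthogonal w u"
    using orthogonal_to_span[of u "\<Union>\<xi>\<in>{\<xi>\<in>matrix_spectrum F. \<xi> < 0}. eigenspace F \<xi>" w] Gu eq by blast
  then show ?thesis unfolding orthogonal_def by (simp add: inner_commute)
qed

end
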